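(* Let $x\in\mathbb{R}^{n}$ with $x\ge0$ entrywise, $x\ne0$, and $\mathbf{1}^{T}x\le\|x\|^{2}$. Then $\mathbf{1}^{T}\left(I-xx^{T}/\|x\|^{2}\right)\mathbf{1}\ge\|(\mathbf{1}-x)_{+}\|^{2}$.
   Context: $\mathbf{1}$ is the all-ones vector in $\mathbb{R}^{n}$ and $(v)_{+}=\max\{0,v\}$ entrywise. *)

theory Defs
  imports "HOL-Analysis.Analysis"
begin

end

theory Submission
  imports Defs
begin

theorem lemma20:
  fixes x :: "real ^ 'n"
  assumes "\<forall>i. x $ i \<ge> 0"
    and "x \<noteq> 0"
    and "(\<chi> i. 1) \<bullet> x \<le> (norm x)\<^sup>2"
  shows "(\<chi> i. 1) \<bullet> ((mat 1 - (1 / (norm x)\<^sup>2) *\<^sub>R (\<chi> i j. x $ i * x $ j)) *v (\<chi> i. 1))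
           \<ge> (norm (\<chi> i. max 0 (1 - x $ i)))\<^sup>2"
proof -
  define q where "q = (norm x)\<^sup>2"
  define s where "s = (\<Sum>i\<in>UNIV. x $ i)"
  have qs: "q = (\<Sum>i\<in>UNIV. (x $ i)\<^sup>2)"
    unfolding q_def power2_norm_eq_inner by (simp add: inner_vec_def power2_eq_square)
  have qpos: "q > 0" using assms(2) unfolding q_def by simp
  have sq: "s \<le> q" using assms(3) unfolding s_def q_def by (simp add: inner_vec_def)
  have s0: "s \<ge> 0" unfolding s_def using assms(1) by (simp add: sum_nonneg)
  define t where "t = s / q"
  have t1: "t \<le> 1" "t \<ge> 0" using sq qpos s0 unfolding t_def by auto
  have L: "(\<chi> i. 1) \<bullet> ((mat 1 - (1 / (norm x)\<^sup>2) *\<^sub>R (\<chi> i j. x $ i * x $ j)) *v (\<chi> i. 1))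
     = (\<Sum>i\<in>UNIV. 1 - x $ i * s / q)"
  proof -
    have c: "((mat 1 - (1 / (norm x)\<^sup>2) *\<^sub>R (\<chi> i j. x $ i * x $ j)) *v (\<chi> i. 1)) $ i
        = 1 - x $ i * s / q" for i
    proof -
      have "((mat 1 - (1 / (norm x)\<^sup>2) *\<^sub>R (\<chi> i j. x $ i * x $ j)) *v (\<chi> i. 1)) $ i
        = (\<Sum>j\<in>UNIV. (if i = j then 1 else 0) - x $ i * x $ j / q)"
        unfolding q_def by (simp add: matrix_vector_mult_def mat_def)
      also have "\<dots> = 1 - x $ i * s / q"
        by (simp add: sum_subtractf s_def sum_distrib_left sum_divide_distrib)
      finally show ?thesis .
    qed
    show ?thesis by (simp add: inner_vec_def c)
  qed
  have "(\<Sum>i\<in>UNIV. 1 - x $ i * s / q) = real CARD('n) - s * s / q"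
    by (simp add: sum_subtractf s_def sum_divide_distrib[symmetric] sum_distrib_right[symmetric])
  also have "\<dots> = (\<Sum>i\<in>UNIV. (1 - t * x $ i)\<^sup>2)"
  proof -
    have "(\<Sum>i\<in>UNIV. (1 - t * x $ i)\<^sup>2) = (\<Sum>i\<in>UNIV. 1 - 2 * t * x $ i + t\<^sup>2 * (x $ i)\<^sup>2)"
      by (rule sum.cong) (auto simp: power2_eq_square algebra_simps)
    also have "\<dots> = real CARD('n) - 2 * t * s + t\<^sup>2 * q"
      by (simp add: sum.distrib sum_subtractf s_def qs sum_distrib_left)
    also have "\<dots> = real CARD('n) - s * s / q"
      using qpos unfolding t_def by (simp add: field_simps power2_eq_square)
    finally show ?thesis by simp
  qed
  finally have L2: "(\<chi> i. 1) \<bullet> ((mat 1 - (1 / (norm x)\<^sup>2) *\<^sub>R (\<chi> i j. x $ i * x $ j)) *v (\<chi> i. 1))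
     = (\<Sum>i\<in>UNIV. (1 - t * x $ i)\<^sup>2)" using L by simp
  have R: "(norm (\<chi> i. max 0 (1 - x $ i)))\<^sup>2 = (\<Sum>i\<in>UNIV. (max 0 (1 - x $ i))\<^sup>2)"
    unfolding power2_norm_eq_inner by (simp add: inner_vec_def power2_eq_square)
  have "(\<Sum>i\<in>UNIV. (max 0 (1 - x $ i))\<^sup>2) \<le> (\<Sum>i\<in>UNIV. (1 - t * x $ i)\<^sup>2)"
  proof (rule sum_mono)
    fix i
    have xi: "x $ i \<ge> 0" using assms(1) by simp
    show "(max 0 (1 - x $ i))\<^sup>2 \<le> (1 - t * x $ i)\<^sup>2"
    proof (cases "x $ i < 1")
      case True
      have "t * x $ i \<le> x $ i" using t1 xi by (simp add: mult_left_le_one_le)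
      then have "0 \<le> 1 - x $ i" "1 - x $ i \<le> 1 - t * x $ i" using True by auto
      then show ?thesis using True by (simp add: power_mono)
    next
      case False
      then show ?thesis by simp
    qed
  qed
  then show ?thesis using L2 R by simp
qed

end
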